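(* Let $H$ and $H'$ be Hessenberg spaces of $n\times n$ matrices, each minimal in its $E_{1n}$-equivalence class. Then $X_H\subseteq X_{H'}$ if and only if $H\subseteq H'$.
   Context: $B$ is the group of invertible upper-triangular $n\times n$ complex matrices; $[g]$ denotes the flag whose $k$-dimensional subspace is spanned by the first $k$ columns of $g$. $E_{kl}$ is the matrix unit with $1$ in entry $(k,l)$. A Hessenberg space is a subspace of the form $H_h=\operatorname{span}\{E_{kl}: k\le h(l)\}$ for a nondecreasing function $h:\{1,\dots,n\}\to\{0,1,\dots,n\}$. For a Hessenberg space $K$, $X_K=\{[g]\in GL_n(\mathbb{C})/B: g^{-1}E_{1n}g\in K\}$. Two Hessenberg spaces $K,K'$ are $E_{1n}$-equivalent if $X_K=X_{K'}$; $K$ is minimal in its $E_{1n}$-equivalence class if no Hessenberg space properly contained in $K$ is $E_{1n}$-equivalent to $K$. *)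

theory Defs
  imports "Jordan_Normal_Form.Matrix"
begin

text \<open>Conventions: n x n complex matrices are JNF matrices in carrier_mat n n,
 with 0-based indices. Row/column index i (0-based) corresponds to i+1 (1-based).\<close>

definition E1n :: "nat \<Rightarrow> complex mat" where
  "E1n n = mat n n (\<lambda>(i,j). if i = 0 \<and> j = n - 1 then 1 else 0)"

text \<open>Hessenberg space H_h = span of E_{kl} with k <= h(l) (1-based);
 0-based: column l, row k allowed iff k < h l.\<close>
definition hess_space :: "nat \<Rightarrow> (nat \<Rightarrow> nat) \<Rightarrow> complex mat set" where
  "hess_space n h = {A \<in> carrier_mat n n. \<forall>k<n. \<forall>l<n. \<not> k < h l \<longrightarrow> A $$ (k,l) = 0}"

definition is_hessenberg_space :: "nat \<Rightarrow> complex mat set \<Rightarrow> bool" where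
  "is_hessenberg_space n K \<longleftrightarrow>
     (\<exists>h. (\<forall>l<n. h l \<le> n) \<and> (\<forall>l1 l2. l1 \<le> l2 \<longrightarrow> l2 < n \<longrightarrow> h l1 \<le> h l2)
          \<and> K = hess_space n h)"

definition flag_of :: "nat \<Rightarrow> complex mat \<Rightarrow> nat \<Rightarrow> complex vec set" where
  "flag_of n g k = {g *\<^sub>v x | x. x \<in> carrier_vec n \<and> (\<forall>i<n. k \<le> i \<longrightarrow> x $ i = 0)}"

definition is_inverse_mat :: "nat \<Rightarrow> complex mat \<Rightarrow> complex mat \<Rightarrow> bool" where
  "is_inverse_mat n g ginv \<longleftrightarrow> g \<in> carrier_mat n n \<and> ginv \<in> carrier_mat n n \<and>
     g * ginv = 1\<^sub>m n \<and> ginv * g = 1\<^sub>m n"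

definition X_hess :: "nat \<Rightarrow> complex mat set \<Rightarrow> (nat \<Rightarrow> complex vec set) set" where
  "X_hess n K = {flag_of n g | g. \<exists>ginv. is_inverse_mat n g ginv \<and> ginv * E1n n * g \<in> K}"

definition E1n_equivalent :: "nat \<Rightarrow> complex mat set \<Rightarrow> complex mat set \<Rightarrow> bool" where
  "E1n_equivalent n K K' \<longleftrightarrow> X_hess n K = X_hess n K'"

definition minimal_in_class :: "nat \<Rightarrow> complex mat set \<Rightarrow> bool" where
  "minimal_in_class n K \<longleftrightarrow> is_hessenberg_space n K \<and>
     \<not> (\<exists>K'. is_hessenberg_space n K' \<and> K' \<subset> K \<and> E1n_equivalent n K' K)"

end

theory Submission imports Defs "Jordan_Normal_Form.Determinant" "HOL-Combinatorics.Transposition" begin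

lemma E1n_left:
  assumes "ginv \<in> carrier_mat n n" "k < n" "j < n" "1 \<le> n"
  shows "(ginv * E1n n) $$ (k,j) = (if j = n - 1 then ginv $$ (k,0) else 0)"
proof -
  have "(ginv * E1n n) $$ (k,j) = (\<Sum>i\<in>{0..<n}. ginv $$ (k,i) * (if i = 0 \<and> j = n - 1 then 1 else 0))"
    using assms by (simp add: E1n_def scalar_prod_def row_def col_def)
  also have "\<dots> = (\<Sum>i\<in>{0..<n}. if i = 0 then (if j = n - 1 then ginv $$ (k,i) else 0) else 0)"
    by (intro sum.cong) auto
  also have "\<dots> = (if j = n - 1 then ginv $$ (k,0) else 0)"
    using assms by (simp add: sum.delta)
  finally show ?thesis .
qed

lemma E1n_entry:
  assumes "ginv \<in> carrier_mat n n" "g \<in> carrier_mat n n" "k < n" "l < n" "1 \<le> n"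
  shows "(ginv * E1n n * g) $$ (k,l) = ginv $$ (k,0) * g $$ (n - 1, l)"
proof -
  have "(ginv * E1n n * g) $$ (k,l) = (\<Sum>j\<in>{0..<n}. (ginv * E1n n) $$ (k,j) * g $$ (j,l))"
    using assms by (simp add: E1n_def scalar_prod_def row_def col_def)
  also have "\<dots> = (\<Sum>j\<in>{0..<n}. if j = n - 1 then ginv $$ (k,0) * g $$ (j,l) else 0)"
    using assms by (intro sum.cong) (auto simp: E1n_left)
  also have "\<dots> = ginv $$ (k,0) * g $$ (n - 1, l)"
    using assms by (simp add: sum.delta')
  finally show ?thesis .
qed

lemma flag_char:
  assumes inv: "is_inverse_mat n g ginv"
  shows "v \<in> flag_of n g k \<longleftrightarrow> v \<in> carrier_vec n \<and> (\<forall>i<n. k \<le> i \<longrightarrow> (ginv *\<^sub>v v) $ i = 0)"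
proof
  have g: "g \<in> carrier_mat n n" and gi: "ginv \<in> carrier_mat n n"
    and m1: "g * ginv = 1\<^sub>m n" and m2: "ginv * g = 1\<^sub>m n" using inv by (auto simp: is_inverse_mat_def)
  {
    assume "v \<in> flag_of n g k"
    then obtain x where v: "v = g *\<^sub>v x" and x: "x \<in> carrier_vec n" "\<forall>i<n. k \<le> i \<longrightarrow> x $ i = 0"
      by (auto simp: flag_of_def)
    have "ginv *\<^sub>v v = (ginv * g) *\<^sub>v x" using v g gi x by (simp add: assoc_mult_mat_vec)
    also have "\<dots> = x" using m2 x by simp
    finally show "v \<in> carrier_vec n \<and> (\<forall>i<n. k \<le> i \<longrightarrow> (ginv *\<^sub>v v) $ i = 0)"
      using x v g by auto
  }
  {
    assume a: "v \<in> carrier_vec n \<and> (\<forall>i<n. k \<le> i \<longrightarrow> (ginv *\<^sub>v v) $ i = 0)"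
    have "g *\<^sub>v (ginv *\<^sub>v v) = (g * ginv) *\<^sub>v v" using a g gi by (simp add: assoc_mult_mat_vec)
    also have "\<dots> = v" using m1 a by simp
    finally show "v \<in> flag_of n g k" unfolding flag_of_def using a gi
      by (intro CollectI exI[of _ "ginv *\<^sub>v v"]) auto
  }
qed

lemma wu_zero:
  assumes inv: "is_inverse_mat n g ginv" and n: "2 \<le> n"
  shows "(\<Sum>j\<in>{0..<n}. g $$ (n - 1, j) * ginv $$ (j, 0)) = 0"
proof -
  have g: "g \<in> carrier_mat n n" and gi: "ginv \<in> carrier_mat n n"
    and m1: "g * ginv = 1\<^sub>m n" using inv by (auto simp: is_inverse_mat_def)
  have "(g * ginv) $$ (n - 1, 0) = 0" using m1 n by simp
  then show ?thesis using g gi n by (simp add: scalar_prod_def row_def col_def)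
qed

lemma hess_mono_X: "K \<subseteq> K' \<Longrightarrow> X_hess n K \<subseteq> X_hess n K'"
  unfolding X_hess_def by blast

lemma hess_le: "(\<And>l. l < n \<Longrightarrow> h l \<le> h' l) \<Longrightarrow> hess_space n h \<subseteq> hess_space n h'"
  unfolding hess_space_def by fastforce

lemma minimal_cond:
  assumes n: "2 \<le> n" and hb: "\<forall>l<n. h l \<le> n"
    and hm: "\<forall>l1 l2. l1 \<le> l2 \<longrightarrow> l2 < n \<longrightarrow> h l1 \<le> h l2"
    and min: "minimal_in_class n (hess_space n h)" and b: "b < n" and hbb: "h b = Suc b"
  shows "0 < b \<and> Suc b \<le> h (b - 1)"
proof (rule ccontr)
  assume c: "\<not> ?thesis"
  have hprev: "h l \<le> b" if "l < b" for l
  proof -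
    have "h l \<le> h (b - 1)" using hm that b by auto
    moreover have "h (b - 1) \<le> b" using c that by auto
    ultimately show ?thesis by simp
  qed
  define h2 where "h2 = h(b := b)"
  have hs: "is_hessenberg_space n (hess_space n h2)"
    unfolding is_hessenberg_space_def
  proof (intro exI[of _ h2] conjI allI impI)
    fix l assume "l < n" then show "h2 l \<le> n" using hb b by (auto simp: h2_def)
  next
    fix l1 l2 :: nat assume l: "l1 \<le> l2" "l2 < n"
    show "h2 l1 \<le> h2 l2"
    proof (cases "l1 = b")
      case True
      have "h b \<le> h l2" using l hm True by blast
      then show ?thesis using True hbb by (auto simp: h2_def)
    next
      case False
      then show ?thesis using l hm hprev by (cases "l2 = b") (auto simp: h2_def)
    qed
  qed simp
  have sub1: "hess_space n h2 \<subseteq> hess_space n h"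
    by (rule hess_le) (auto simp: h2_def hbb)
  define D where "D = mat n n (\<lambda>(i,j). if i = b \<and> j = b then (1::complex) else 0)"
  have "D \<in> hess_space n h" using hbb b by (auto simp: hess_space_def D_def)
  moreover have "D \<notin> hess_space n h2" using b by (auto simp: hess_space_def D_def h2_def)
  ultimately have sub: "hess_space n h2 \<subset> hess_space n h" using sub1 by blast
  have eq: "X_hess n (hess_space n h2) = X_hess n (hess_space n h)"
  proof
    show "X_hess n (hess_space n h2) \<subseteq> X_hess n (hess_space n h)" using sub1 by (rule hess_mono_X)
  next
    show "X_hess n (hess_space n h) \<subseteq> X_hess n (hess_space n h2)"
    proof
      fix F assume "F \<in> X_hess n (hess_space n h)"
      then obtain g ginv where F: "F = flag_of n g" and inv: "is_inverse_mat n g ginv"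
        and M: "ginv * E1n n * g \<in> hess_space n h" by (auto simp: X_hess_def)
      have g: "g \<in> carrier_mat n n" and gi: "ginv \<in> carrier_mat n n"
        using inv by (auto simp: is_inverse_mat_def)
      have ent: "(ginv * E1n n * g) $$ (k,l) = ginv $$ (k,0) * g $$ (n - 1, l)" if "k < n" "l < n" for k l
        using E1n_entry[OF gi g that] n by simp
      have Mz: "ginv $$ (k,0) * g $$ (n - 1, l) = 0" if "k < n" "l < n" "\<not> k < h l" for k l
        using M that ent by (auto simp: hess_space_def)
      have bb: "ginv $$ (b,0) * g $$ (n - 1, b) = 0"
      proof (rule ccontr)
        assume nz: "ginv $$ (b,0) * g $$ (n - 1, b) \<noteq> 0"
        have u: "ginv $$ (k,0) = 0" if "b < k" "k < n" for k
          using Mz[of k b] that hbb nz by auto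
        have w: "g $$ (n - 1, l) = 0" if "l < b" for l
          using Mz[of b l] that hprev[OF that] nz b by auto
        have "(\<Sum>j\<in>{0..<n}. g $$ (n - 1, j) * ginv $$ (j, 0))
            = (\<Sum>j\<in>{0..<n}. if j = b then g $$ (n - 1, b) * ginv $$ (b, 0) else 0)"
        proof (rule sum.cong)
          fix j assume "j \<in> {0..<n}"
          then show "g $$ (n - 1, j) * ginv $$ (j, 0) = (if j = b then g $$ (n - 1, b) * ginv $$ (b, 0) else 0)"
            using u w by (cases "j < b"; cases "b < j") auto
        qed simp
        also have "\<dots> = g $$ (n - 1, b) * ginv $$ (b, 0)" using b by simp
        finally show False using wu_zero[OF inv n] nz by (simp add: mult.commute)
      qed
      have "ginv * E1n n * g \<in> hess_space n h2"
        using M unfolding hess_space_def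
      proof (intro CollectI conjI allI impI)
        fix k l assume kl: "k < n" "l < n" "\<not> k < h2 l"
        show "(ginv * E1n n * g) $$ (k, l) = 0"
        proof (cases "l = b")
          case True
          then show ?thesis using kl Mz[of k l] ent[of k l] bb hbb
            by (cases "k = b") (auto simp: h2_def)
        next
          case False
          then show ?thesis using kl Mz[of k l] ent[of k l] by (auto simp: h2_def)
        qed
      qed auto
      then show "F \<in> X_hess n (hess_space n h2)" using F inv by (auto simp: X_hess_def)
    qed
  qed
  show False using min hs sub eq unfolding minimal_in_class_def E1n_equivalent_def by blast
qed

lemma sum_single:
  fixes n b :: nat
  assumes "b < n" "\<And>j. j < n \<Longrightarrow> j \<noteq> b \<Longrightarrow> f j = 0"
  shows "(\<Sum>j\<in>{0..<n}. f j) = f b"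
proof -
  have "(\<Sum>j\<in>{0..<n}. f j) = (\<Sum>j\<in>{0..<n}. if j = b then f b else 0)"
    using assms by (intro sum.cong) auto
  also have "\<dots> = f b" using assms(1) by (subst sum.delta) auto
  finally show ?thesis .
qed

lemma last_entry:
  assumes inv: "is_inverse_mat n g ginv" and v: "v \<in> carrier_vec n" and i: "i < n"
  shows "v $ i = (\<Sum>j\<in>{0..<n}. g $$ (i, j) * (ginv *\<^sub>v v) $ j)"
proof -
  have g: "g \<in> carrier_mat n n" and gi: "ginv \<in> carrier_mat n n"
    and m1: "g * ginv = 1\<^sub>m n" using inv by (auto simp: is_inverse_mat_def)
  have "g *\<^sub>v (ginv *\<^sub>v v) = (g * ginv) *\<^sub>v v" using v g gi by (simp add: assoc_mult_mat_vec)
  also have "\<dots> = v" using m1 v by simp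
  finally have "v $ i = (g *\<^sub>v (ginv *\<^sub>v v)) $ i" by simp
  then show ?thesis using g gi i by (simp add: scalar_prod_def row_def)
qed

lemma mat_unit_entry:
  fixes A :: "complex mat"
  assumes "A \<in> carrier_mat n n" "i < n" "j < n"
  shows "(A *\<^sub>v unit_vec n j) $ i = A $$ (i, j)"
proof -
  have "(A *\<^sub>v unit_vec n j) $ i = (\<Sum>k\<in>{0..<n}. A $$ (i,k) * unit_vec n j $ k)"
    using assms by (simp add: scalar_prod_def row_def)
  also have "(\<Sum>k\<in>{0..<n}. A $$ (i,k) * unit_vec n j $ k) = A $$ (i,j) * unit_vec n j $ j"
    using assms by (intro sum_single) auto
  finally show ?thesis using assms by simp
qed

lemma key:
  assumes n: "2 \<le> n" and a: "a < n" and b: "b < n" and ab: "a \<noteq> b" and hab: "a < h b"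
    and XX: "X_hess n (hess_space n h) \<subseteq> X_hess n (hess_space n h')"
  shows "a < h' b"
proof -
  define p where "p = transpose (transpose a 0 b) (n - 1) \<circ> transpose a 0"
  have injp: "inj p" unfolding p_def by (simp add: inj_transpose inj_compose)
  have pn: "p j < n" if "j < n" for j
    using that a b n unfolding p_def by (auto simp: transpose_def)
  have pa: "p a = 0" using ab n unfolding p_def by (auto simp: transpose_def)
  have pb: "p b = n - 1" using ab n unfolding p_def by (auto simp: transpose_def)
  have p0: "p j = 0 \<longleftrightarrow> j = a" for j using injp pa by (metis injD)
  have pl: "p j = n - 1 \<longleftrightarrow> j = b" for j using injp pb by (metis injD)
  define g where "g = mat n n (\<lambda>(i,j). if i = p j then (1::complex) else 0)"
  define gi where "gi = mat n n (\<lambda>(i,j). if j = p i then (1::complex) else 0)"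
  have gc: "g \<in> carrier_mat n n" and gic: "gi \<in> carrier_mat n n" by (auto simp: g_def gi_def)
  have m2: "gi * g = 1\<^sub>m n"
  proof (rule eq_matI)
    fix i j assume ij: "i < dim_row (1\<^sub>m n)" "j < dim_col (1\<^sub>m n)"
    have "(gi * g) $$ (i,j) = (\<Sum>k\<in>{0..<n}. (if k = p i then (1::complex) else 0) * (if k = p j then 1 else 0))"
      using ij by (simp add: g_def gi_def scalar_prod_def row_def col_def)
    also have "\<dots> = (if p i = p j then 1 else 0)"
      using ij pn by (subst sum_single[of "p i"]) auto
    also have "\<dots> = 1\<^sub>m n $$ (i,j)" using ij injp by (auto dest: injD)
    finally show "(gi * g) $$ (i,j) = 1\<^sub>m n $$ (i,j)" .
  qed (auto simp: g_def gi_def)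
  have m1: "g * gi = 1\<^sub>m n" using mat_mult_left_right_inverse[OF gic gc m2] .
  have inv: "is_inverse_mat n g gi" using gc gic m1 m2 by (simp add: is_inverse_mat_def)
  have Mh: "gi * E1n n * g \<in> hess_space n h"
    unfolding hess_space_def
  proof (intro CollectI conjI allI impI)
    fix k l assume kl: "k < n" "l < n" "\<not> k < h l"
    have "(gi * E1n n * g) $$ (k,l) = gi $$ (k,0) * g $$ (n - 1, l)"
      using E1n_entry[OF gic gc kl(1,2)] n by simp
    also have "\<dots> = 0"
    proof (rule ccontr)
      assume "gi $$ (k,0) * g $$ (n - 1, l) \<noteq> 0"
      hence "p k = 0" "n - 1 = p l" using kl by (auto simp: g_def gi_def split: if_splits)
      hence "k = a" "l = b" using p0[of k] pl[of l] by auto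
      then show False using kl hab by simp
    qed
    finally show "(gi * E1n n * g) $$ (k,l) = 0" .
  qed (use gc gic in auto)
  have "flag_of n g \<in> X_hess n (hess_space n h)" using inv Mh by (auto simp: X_hess_def)
  with XX have "flag_of n g \<in> X_hess n (hess_space n h')" by blast
  then obtain g' gi' where F: "flag_of n g = flag_of n g'" and inv': "is_inverse_mat n g' gi'"
    and M': "gi' * E1n n * g' \<in> hess_space n h'" unfolding X_hess_def by blast
  have gc': "g' \<in> carrier_mat n n" and gic': "gi' \<in> carrier_mat n n"
    using inv' by (auto simp: is_inverse_mat_def)
  define e0 where "e0 = (unit_vec n 0 :: complex vec)"
  define el where "el = (unit_vec n (n - 1) :: complex vec)"
  have e0c: "e0 \<in> carrier_vec n" and elc: "el \<in> carrier_vec n" by (auto simp: e0_def el_def)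
  have gie0: "(gi *\<^sub>v e0) $ i = (if i = a then 1 else 0)" if "i < n" for i
    using that n p0 unfolding e0_def by (simp add: mat_unit_entry[OF gic] gi_def)
  have giel: "(gi *\<^sub>v el) $ i = (if i = b then 1 else 0)" if "i < n" for i
  proof -
    have "(gi *\<^sub>v el) $ i = gi $$ (i, n - 1)" using that n unfolding el_def by (simp add: mat_unit_entry[OF gic])
    also have "\<dots> = (if n - 1 = p i then 1 else 0)" using that n by (simp add: gi_def)
    also have "\<dots> = (if i = b then 1 else 0)" using pl[of i] by metis
    finally show ?thesis .
  qed
  have gie0': "(gi' *\<^sub>v e0) $ i = gi' $$ (i, 0)" if "i < n" for i
    using that n unfolding e0_def by (simp add: mat_unit_entry[OF gic'])
  have "e0 \<in> flag_of n g (Suc a)" using gie0 e0c by (subst flag_char[OF inv]) auto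
  hence "e0 \<in> flag_of n g' (Suc a)" using F by simp
  hence "\<forall>i<n. Suc a \<le> i \<longrightarrow> (gi' *\<^sub>v e0) $ i = 0" using flag_char[OF inv', of e0 "Suc a"] by blast
  hence A1: "\<forall>i<n. Suc a \<le> i \<longrightarrow> gi' $$ (i, 0) = 0" using gie0' by simp
  have "e0 \<notin> flag_of n g a" using gie0 a by (subst flag_char[OF inv]) auto
  hence "e0 \<notin> flag_of n g' a" using F by simp
  hence "\<not> (\<forall>i<n. a \<le> i \<longrightarrow> (gi' *\<^sub>v e0) $ i = 0)" using flag_char[OF inv', of e0 a] e0c by blast
  hence "\<not> (\<forall>i<n. a \<le> i \<longrightarrow> gi' $$ (i, 0) = 0)" using gie0' by simp
  then obtain i where i: "i < n" "a \<le> i" "gi' $$ (i, 0) \<noteq> 0" by blast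
  have "i = a"
  proof (rule ccontr)
    assume "i \<noteq> a"
    hence "Suc a \<le> i" using i by simp
    thus False using A1 i by blast
  qed
  hence ua: "gi' $$ (a, 0) \<noteq> 0" using i by simp
  have wl: "g' $$ (n - 1, j) = 0" if j: "j < b" for j
  proof -
    define v where "v = g' *\<^sub>v unit_vec n j"
    have vc: "v \<in> carrier_vec n" using gc' by (simp add: v_def)
    have "gi' *\<^sub>v v = (gi' * g') *\<^sub>v unit_vec n j" using gc' gic' by (simp add: v_def assoc_mult_mat_vec)
    also have "\<dots> = unit_vec n j" using inv' by (simp add: is_inverse_mat_def)
    finally have "v \<in> flag_of n g' b" using vc j b by (subst flag_char[OF inv']) auto
    hence "v \<in> flag_of n g b" using F by simp
    hence z: "\<forall>i<n. b \<le> i \<longrightarrow> (gi *\<^sub>v v) $ i = 0" using flag_char[OF inv, of v b] by blast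
    have "v $ (n - 1) = (\<Sum>i\<in>{0..<n}. g $$ (n - 1, i) * (gi *\<^sub>v v) $ i)"
      using last_entry[OF inv vc] n by simp
    also have "\<dots> = g $$ (n - 1, b) * (gi *\<^sub>v v) $ b"
    proof (rule sum_single[OF b])
      fix i assume i: "i < n" "i \<noteq> b"
      have "p i \<noteq> n - 1" using pl[of i] i by blast
      then show "g $$ (n - 1, i) * (gi *\<^sub>v v) $ i = 0" using i n by (simp add: g_def)
    qed
    also have "\<dots> = 0" using z b by simp
    finally show ?thesis using j b n gc' by (simp add: v_def mat_unit_entry)
  qed
  have "el \<in> flag_of n g (Suc b)" using giel elc by (subst flag_char[OF inv]) auto
  hence "el \<in> flag_of n g' (Suc b)" using F by simp
  hence B1: "\<forall>i<n. Suc b \<le> i \<longrightarrow> (gi' *\<^sub>v el) $ i = 0"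
    using flag_char[OF inv', of el "Suc b"] by blast
  have "1 = el $ (n - 1)" using n by (simp add: el_def)
  also have "\<dots> = (\<Sum>i\<in>{0..<n}. g' $$ (n - 1, i) * (gi' *\<^sub>v el) $ i)"
    using last_entry[OF inv' elc] n by simp
  also have "\<dots> = g' $$ (n - 1, b) * (gi' *\<^sub>v el) $ b"
  proof (rule sum_single[OF b])
    fix j assume "j < n" "j \<noteq> b"
    then show "g' $$ (n - 1, j) * (gi' *\<^sub>v el) $ j = 0"
      using wl B1 by (cases "j < b") auto
  qed
  finally have wb: "g' $$ (n - 1, b) \<noteq> 0" by auto
  have "(gi' * E1n n * g') $$ (a, b) = gi' $$ (a, 0) * g' $$ (n - 1, b)"
    using E1n_entry[OF gic' gc' a b] n by simp
  also have "\<dots> \<noteq> 0" using ua wb by simp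
  finally show ?thesis using M' a b unfolding hess_space_def by auto
qed

lemma n1_case:
  assumes n: "n = 1" and hb: "h 0 \<le> 1"
    and XX: "X_hess n (hess_space n h) \<subseteq> X_hess n (hess_space n h')"
  shows "h 0 \<le> h' 0"
proof (cases "h 0 = 0")
  case True then show ?thesis by simp
next
  case False
  hence h1: "h 0 = 1" using hb by simp
  have inv: "is_inverse_mat n (1\<^sub>m n) (1\<^sub>m n)" by (simp add: is_inverse_mat_def)
  have "1\<^sub>m n * E1n n * 1\<^sub>m n \<in> hess_space n h"
    unfolding hess_space_def using n h1 by (auto simp: E1n_def)
  hence "flag_of n (1\<^sub>m n) \<in> X_hess n (hess_space n h)" using inv unfolding X_hess_def by blast
  with XX have "flag_of n (1\<^sub>m n) \<in> X_hess n (hess_space n h')" by blast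
  then obtain g' gi' where inv': "is_inverse_mat n g' gi'"
    and M': "gi' * E1n n * g' \<in> hess_space n h'" unfolding X_hess_def by blast
  have gc': "g' \<in> carrier_mat n n" and gic': "gi' \<in> carrier_mat n n" and m2: "gi' * g' = 1\<^sub>m n"
    using inv' by (auto simp: is_inverse_mat_def)
  have "(gi' * g') $$ (0,0) = gi' $$ (0,0) * g' $$ (0,0)"
    using gc' gic' n by (simp add: scalar_prod_def row_def col_def)
  hence nz: "gi' $$ (0,0) * g' $$ (0,0) = 1" using m2 n by simp
  have "(gi' * E1n n * g') $$ (0,0) = gi' $$ (0,0) * g' $$ (n - 1, 0)"
    using E1n_entry[OF gic' gc'] n by simp
  hence "(gi' * E1n n * g') $$ (0,0) \<noteq> 0" using nz n by simp
  hence "0 < h' 0" using M' n unfolding hess_space_def by auto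
  then show ?thesis using h1 by simp
qed

theorem mainTheorem7:
  fixes n :: nat and H H' :: "complex mat set"
  assumes "1 \<le> n"
    and "is_hessenberg_space n H" and "is_hessenberg_space n H'"
    and "minimal_in_class n H" and "minimal_in_class n H'"
  shows "X_hess n H \<subseteq> X_hess n H' \<longleftrightarrow> H \<subseteq> H'"
proof
  assume "H \<subseteq> H'" then show "X_hess n H \<subseteq> X_hess n H'" by (rule hess_mono_X)
next
  assume XX: "X_hess n H \<subseteq> X_hess n H'"
  obtain h where hb: "\<forall>l<n. h l \<le> n" and hm: "\<forall>l1 l2. l1 \<le> l2 \<longrightarrow> l2 < n \<longrightarrow> h l1 \<le> h l2"
    and H: "H = hess_space n h" using assms(2) unfolding is_hessenberg_space_def by blast
  obtain h' where hb': "\<forall>l<n. h' l \<le> n" and hm': "\<forall>l1 l2. l1 \<le> l2 \<longrightarrow> l2 < n \<longrightarrow> h' l1 \<le> h' l2"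
    and H': "H' = hess_space n h'" using assms(3) unfolding is_hessenberg_space_def by blast
  have XX': "X_hess n (hess_space n h) \<subseteq> X_hess n (hess_space n h')" using XX H H' by simp
  have le: "h l \<le> h' l" if l: "l < n" for l
  proof (cases "n = 1")
    case True
    then show ?thesis using n1_case[OF True _ XX'] hb l by simp
  next
    case False
    hence n: "2 \<le> n" using assms(1) by simp
    consider "h l \<le> l" | "h l = Suc l" | "Suc (Suc l) \<le> h l" by linarith
    then show ?thesis
    proof cases
      case 1
      show ?thesis
      proof (cases "h l = 0")
        case False
        have "h l - 1 < h' l" using key[OF n _ l _ _ XX', of "h l - 1"] 1 False l by simp
        then show ?thesis by simp
      qed simp
    next
      case 2
      have mc: "0 < l \<and> Suc l \<le> h (l - 1)"
        using minimal_cond[OF n hb hm _ l 2] assms(4) H by simp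
      have "h (l - 1) \<le> n" using hb l by simp
      have x1: "l - 1 < n" "h (l - 1) - 1 \<noteq> l - 1" "h (l - 1) - 1 < n" "h (l - 1) - 1 < h (l - 1)"
        using mc l \<open>h (l - 1) \<le> n\<close> by linarith+
      have "h (l - 1) - 1 < h' (l - 1)"
        using key[OF n x1(3) x1(1) x1(2) x1(4) XX'] .
      moreover have "h' (l - 1) \<le> h' l" using hm' l by simp
      ultimately show ?thesis using mc 2 by linarith
    next
      case 3
      have "h l \<le> n" using hb l by simp
      have "h l - 1 < h' l" using key[OF n _ l _ _ XX', of "h l - 1"] 3 l \<open>h l \<le> n\<close> by simp
      then show ?thesis by simp
    qed
  qed
  show "H \<subseteq> H'" unfolding H H' by (rule hess_le) (use le in auto)
qed

end
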